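(* Let $G$ be a finite graph (multiple edges and self-loops allowed) with $I$ edges, $V$ vertices and $c$ connected components, and let $L=I-V+c$. Then there exist an orientation of the edges of $G$ and $L$ simple cycles $\gamma_1,\ldots,\gamma_L$ of $G$ with the following properties: - each $\gamma_j$ is a directed (oriented) cycle with respect to this orientation; - the edge-indicator vectors of $\gamma_1,\dots,\gamma_L$ in $\mathbb{R}^I$ are linearly independent. Consequently, assigning to each edge $\ell_i$ the "energy" $E_i=\sum_{j=1}^L a_{ij}e_j$ with $a_{ij}=1$ if $\ell_i\in\gamma_j$ and $a_{ij}=0$ otherwise, where $e_1,\dots,e_L$ are free real parameters (loop energies), gives the following parametrization. Every energy flow conserved at each vertex (total energy flowing in equals total energy flowing out, with zero external energies) is of this form. In this parametrization each leg's energy is a linear combination of $e_1,\dots,e_L$ with coefficients $0$ or $1$, and the flow of each $e_j$ runs along the oriented minimal loop $\gamma_j$.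
   Context: A simple cycle in a graph is a closed sequence of distinct edges through distinct vertices; a self-loop is a simple cycle of length one. A cycle is directed (oriented) with respect to an orientation of the edges if all its edges have coherent orientations along the cycle: at each shared vertex, one edge points into the vertex and the next points out of it. *)

theory Defs
  imports Complex_Main
begin

text \<open>A finite multigraph: vertex set V, edge set E (edge labels, so multiple edges
are allowed), and ends e = the two endpoints of edge e (possibly equal: self-loop).
The order of the pair in ends is irrelevant for the undirected graph.\<close>

definition multigraph :: "'v set \<Rightarrow> 'e set \<Rightarrow> ('e \<Rightarrow> 'v \<times> 'v) \<Rightarrow> bool" where
  "multigraph V E ends \<longleftrightarrow> finite V \<and> finite E \<and>
     (\<forall>e\<in>E. fst (ends e) \<in> V \<and> snd (ends e) \<in> V)"

definition adjacent :: "'e set \<Rightarrow> ('e \<Rightarrow> 'v \<times> 'v) \<Rightarrow> 'v \<Rightarrow> 'v \<Rightarrow> bool" where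
  "adjacent E ends u v \<longleftrightarrow> (\<exists>e\<in>E. {fst (ends e), snd (ends e)} = {u, v})"

definition components :: "'v set \<Rightarrow> 'e set \<Rightarrow> ('e \<Rightarrow> 'v \<times> 'v) \<Rightarrow> 'v set set" where
  "components V E ends = V // {(u, v). u \<in> V \<and> v \<in> V \<and> (adjacent E ends)\<^sup>*\<^sup>* u v}"

definition num_components :: "'v set \<Rightarrow> 'e set \<Rightarrow> ('e \<Rightarrow> 'v \<times> 'v) \<Rightarrow> nat" where
  "num_components V E ends = card (components V E ends)"

definition orientation :: "'e set \<Rightarrow> ('e \<Rightarrow> 'v \<times> 'v) \<Rightarrow> ('e \<Rightarrow> 'v \<times> 'v) \<Rightarrow> bool" where
  "orientation E ends ori \<longleftrightarrow>
     (\<forall>e\<in>E. ori e = ends e \<or> ori e = prod.swap (ends e))"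

text \<open>A self-loop is a simple cycle of length one.\<close>
definition simple_cycle :: "'e set \<Rightarrow> ('e \<Rightarrow> 'v \<times> 'v) \<Rightarrow> 'e list \<Rightarrow> 'v list \<Rightarrow> bool" where
  "simple_cycle E ends es vs \<longleftrightarrow>
     length es = length vs \<and> length es \<ge> 1 \<and> distinct es \<and> distinct vs \<and> set es \<subseteq> E \<and>
     (\<forall>i < length es. {fst (ends (es ! i)), snd (ends (es ! i))}
                       = {vs ! i, vs ! ((i + 1) mod length es)})"

definition directed_cycle :: "('e \<Rightarrow> 'v \<times> 'v) \<Rightarrow> 'e list \<Rightarrow> 'v list \<Rightarrow> bool" where
  "directed_cycle ori es vs \<longleftrightarrow>
     (\<forall>i < length es. ori (es ! i) = (vs ! i, vs ! ((i + 1) mod length es)))"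

definition conserved :: "'v set \<Rightarrow> 'e set \<Rightarrow> ('e \<Rightarrow> 'v \<times> 'v) \<Rightarrow> ('e \<Rightarrow> real) \<Rightarrow> bool" where
  "conserved V E ori f \<longleftrightarrow>
     (\<forall>v\<in>V. (\<Sum>e\<in>{e\<in>E. snd (ori e) = v}. f e) = (\<Sum>e\<in>{e\<in>E. fst (ori e) = v}. f e))"

end

theory Submission
  imports Defs
begin


abbreviation conn :: "'e set \<Rightarrow> ('e \<Rightarrow> 'v \<times> 'v) \<Rightarrow> 'v \<Rightarrow> 'v \<Rightarrow> bool" where
  "conn H ends \<equiv> (adjacent H ends)\<^sup>*\<^sup>*"

definition sep :: "'e set \<Rightarrow> ('e \<Rightarrow> 'v \<times> 'v) \<Rightarrow> 'e \<Rightarrow> bool" where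
  "sep H ends f \<longleftrightarrow> \<not> conn (H - {f}) ends (fst (ends f)) (snd (ends f))"

definition dstep :: "('e \<Rightarrow> 'v \<times> 'v) \<Rightarrow> 'e set \<Rightarrow> 'v \<Rightarrow> 'v \<Rightarrow> bool" where
  "dstep ori H x y \<longleftrightarrow> (\<exists>g\<in>H. ori g = (x, y))"

abbreviation dreach where "dreach ori H \<equiv> (dstep ori H)\<^sup>*\<^sup>*"

lemma adjacent_sym: "adjacent H ends x y \<Longrightarrow> adjacent H ends y x"
  unfolding adjacent_def by (metis insert_commute)

lemma conn_sym: "conn H ends x y \<Longrightarrow> conn H ends y x"
proof (induction rule: rtranclp_induct)
  case base then show ?case by simp
next
  case (step y z)
  show ?case by (rule converse_rtranclp_into_rtranclp[OF adjacent_sym[OF step(2)] step(3)])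
qed

lemma adjacent_mono: "H1 \<subseteq> H2 \<Longrightarrow> adjacent H1 ends x y \<Longrightarrow> adjacent H2 ends x y"
  unfolding adjacent_def by blast

lemma conn_mono:
  assumes "H1 \<subseteq> H2" "conn H1 ends x y" shows "conn H2 ends x y"
  using assms(2)
proof (induction rule: rtranclp_induct)
  case base then show ?case by simp
next
  case (step y z)
  show ?case by (rule rtranclp.rtrancl_into_rtrancl[OF step(3) adjacent_mono[OF assms(1) step(2)]])
qed

lemma adjacent_insert: "adjacent (insert e S) ends x y \<longleftrightarrow> adjacent S ends x y \<or> {fst (ends e), snd (ends e)} = {x, y}"
  unfolding adjacent_def by blast

lemma conn_edge: "e \<in> S \<Longrightarrow> conn S ends (fst (ends e)) (snd (ends e))"
  unfolding adjacent_def by (rule r_into_rtranclp) blast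

lemma conn_insert:
  assumes "conn (insert e S) ends x y" "ends e = (p, q)"
  shows "conn S ends x y \<or> (conn S ends x p \<and> conn S ends q y) \<or> (conn S ends x q \<and> conn S ends p y)"
  using assms(1)
proof (induction rule: rtranclp_induct)
  case base then show ?case by simp
next
  case (step y z)
  from step(2) have "adjacent S ends y z \<or> {p, q} = {y, z}"
    using assms(2) by (simp add: adjacent_insert)
  then show ?case
  proof
    assume a: "adjacent S ends y z"
    note t = rtranclp.rtrancl_into_rtrancl[of "adjacent S ends", OF _ a]
    from step(3) show ?thesis
    proof (elim disjE)
      assume "conn S ends x y" then show ?thesis using t by blast
    next
      assume "conn S ends x p \<and> conn S ends q y" then show ?thesis using t by blast
    next
      assume "conn S ends x q \<and> conn S ends p y" then show ?thesis using t by blast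
    qed
  next
    assume "{p, q} = {y, z}"
    then have "(y = p \<and> z = q) \<or> (y = q \<and> z = p)" by (auto simp: doubleton_eq_iff)
    then show ?thesis
    proof
      assume yz: "y = p \<and> z = q"
      from step(3) show ?thesis
      proof (elim disjE)
        assume "conn S ends x y" then show ?thesis using yz by auto
      next
        assume h: "conn S ends x p \<and> conn S ends q y"
        have "conn S ends q p" using h yz by simp
        then have "conn S ends x q" using rtranclp_trans[OF conjunct1[OF h] conn_sym] by blast
        then show ?thesis using yz by auto
      next
        assume h: "conn S ends x q \<and> conn S ends p y"
        then show ?thesis using yz by auto
      qed
    next
      assume yz: "y = q \<and> z = p"
      from step(3) show ?thesis
      proof (elim disjE)
        assume "conn S ends x y" then show ?thesis using yz by auto
      next
        assume h: "conn S ends x p \<and> conn S ends q y"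
        then show ?thesis using yz by auto
      next
        assume h: "conn S ends x q \<and> conn S ends p y"
        have "conn S ends p q" using h yz by simp
        then have "conn S ends x p" using rtranclp_trans[OF conjunct1[OF h] conn_sym] by blast
        then show ?thesis using yz by auto
      qed
    qed
  qed
qed

lemma conn_insert_conn:
  assumes "conn S ends (fst (ends e)) (snd (ends e))"
  shows "conn (insert e S) ends x y \<longleftrightarrow> conn S ends x y"
proof
  assume "conn (insert e S) ends x y"
  from conn_insert[OF this, of "fst (ends e)" "snd (ends e)"] 
  have "conn S ends x y \<or> (conn S ends x (fst (ends e)) \<and> conn S ends (snd (ends e)) y) \<or> (conn S ends x (snd (ends e)) \<and> conn S ends (fst (ends e)) y)" by simp
  then show "conn S ends x y"
  proof (elim disjE)
    assume h: "conn S ends x (fst (ends e)) \<and> conn S ends (snd (ends e)) y"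
    show ?thesis using rtranclp_trans[OF rtranclp_trans[OF conjunct1[OF h] assms] conjunct2[OF h]] .
  next
    assume h: "conn S ends x (snd (ends e)) \<and> conn S ends (fst (ends e)) y"
    show ?thesis using rtranclp_trans[OF rtranclp_trans[OF conjunct1[OF h] conn_sym[OF assms]] conjunct2[OF h]] .
  qed
next
  assume "conn S ends x y" then show "conn (insert e S) ends x y"
    by (rule conn_mono[rotated]) auto
qed

lemma rtranclp_crossing:
  assumes "r\<^sup>*\<^sup>* x y" "P y" "\<not> P x"
  shows "\<exists>a b. r a b \<and> \<not> P a \<and> P b"
  using assms by (induction rule: converse_rtranclp_induct) auto

lemma dstep_mono: "H1 \<subseteq> H2 \<Longrightarrow> dstep ori H1 x y \<Longrightarrow> dstep ori H2 x y"
  unfolding dstep_def by blast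

lemma dreach_mono:
  assumes "H1 \<subseteq> H2" "dreach ori H1 x y" shows "dreach ori H2 x y"
  using assms(2)
proof (induction rule: rtranclp_induct)
  case base then show ?case by simp
next
  case (step y z)
  show ?case by (rule rtranclp.rtrancl_into_rtrancl[OF step(3) dstep_mono[OF assms(1) step(2)]])
qed

lemma dreach_cong: "(\<And>g. g \<in> H \<Longrightarrow> ori g = ori2 g) \<Longrightarrow> dreach ori H x y \<Longrightarrow> dreach ori2 H x y"
proof -
  assume "\<And>g. g \<in> H \<Longrightarrow> ori g = ori2 g"
  then have "dstep ori H = dstep ori2 H" unfolding dstep_def by (intro ext) auto
  then show "dreach ori H x y \<Longrightarrow> dreach ori2 H x y" by simp
qed

lemma dstep_adjacent: "orientation H ends ori \<Longrightarrow> dstep ori H x y \<Longrightarrow> adjacent H ends x y"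
proof -
  assume o: "orientation H ends ori" and d: "dstep ori H x y"
  from d obtain g where g: "g \<in> H" "ori g = (x, y)" unfolding dstep_def by blast
  from o g(1) have "ori g = ends g \<or> ori g = prod.swap (ends g)" unfolding orientation_def by blast
  then have "{fst (ends g), snd (ends g)} = {x, y}"
  proof
    assume "ori g = ends g" then show ?thesis using g(2) by (metis fst_conv snd_conv)
  next
    assume "ori g = prod.swap (ends g)" then show ?thesis using g(2)
      by (metis fst_conv snd_conv fst_swap snd_swap insert_commute)
  qed
  then show ?thesis using g(1) unfolding adjacent_def by blast
qed

lemma dreach_conn:
  assumes "orientation H ends ori" "dreach ori H x y" shows "conn H ends x y"
  using assms(2)
proof (induction rule: rtranclp_induct)
  case base then show ?case by simp
next
  case (step y z)
  show ?case by (rule rtranclp.rtrancl_into_rtrancl[OF step(3) dstep_adjacent[OF assms(1) step(2)]])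
qed

lemma dreach_avoid:
  assumes "dreach ori H x y" "f \<in> H" "ori f = (a, b)"
  shows "dreach ori (H - {f}) x y \<or> dreach ori H b y"
  using assms(1)
proof (induction rule: converse_rtranclp_induct)
  case base then show ?case by simp
next
  case (step x z)
  then obtain g where g: "g \<in> H" "ori g = (x, z)" unfolding dstep_def by blast
  show ?case
  proof (cases "g = f")
    case True
    then have "z = b" using g assms(3) by simp
    then show ?thesis using step(2) by simp
  next
    case False
    then have "dstep ori (H - {f}) x z" using g unfolding dstep_def by blast
    note t = converse_rtranclp_into_rtranclp[of "dstep ori (H - {f})", OF this]
    from step(3) show ?thesis
    proof
      assume "dreach ori (H - {f}) z y" then show ?thesis using t by blast
    qed simp
  qed
qed



lemma dreach_path:
  assumes "dreach ori H x y"
  shows "\<exists>pes pvs. length pvs = Suc (length pes) \<and> pvs ! 0 = x \<and> pvs ! length pes = y \<and>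
    distinct pvs \<and> set pes \<subseteq> H \<and> (\<forall>i<length pes. ori (pes ! i) = (pvs ! i, pvs ! Suc i))"
  using assms
proof (induction rule: converse_rtranclp_induct)
  case base
  show ?case by (rule exI[of _ "[]"], rule exI[of _ "[y]"]) simp
next
  case (step x z)
  from step(1) obtain g where g: "g \<in> H" "ori g = (x, z)" unfolding dstep_def by blast
  from step(3) obtain pes pvs where P: "length pvs = Suc (length pes)" "pvs ! 0 = z" "pvs ! length pes = y"
    "distinct pvs" "set pes \<subseteq> H" "\<forall>i<length pes. ori (pes ! i) = (pvs ! i, pvs ! Suc i)" by blast
  show ?case
  proof (cases "x \<in> set pvs")
    case False
    show ?thesis
    proof (rule exI[of _ "g # pes"], rule exI[of _ "x # pvs"], intro conjI)
      show "\<forall>i<length (g # pes). ori ((g # pes) ! i) = ((x # pvs) ! i, (x # pvs) ! Suc i)"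
      proof (intro allI impI)
        fix i assume "i < length (g # pes)"
        then show "ori ((g # pes) ! i) = ((x # pvs) ! i, (x # pvs) ! Suc i)"
          using P g by (cases i) auto
      qed
    qed (use P g False in auto)
  next
    case True
    then obtain k where k: "k < length pvs" "pvs ! k = x" by (auto simp: in_set_conv_nth)
    show ?thesis
    proof (rule exI[of _ "drop k pes"], rule exI[of _ "drop k pvs"], intro conjI)
      show "\<forall>i<length (drop k pes). ori (drop k pes ! i) = (drop k pvs ! i, drop k pvs ! Suc i)"
        using P k by (auto simp: add.commute)
      show "set (drop k pes) \<subseteq> H" using P(5) set_drop_subset by fast
    qed (use P k in auto)
  qed
qed

lemma path_conn:
  assumes "orientation H ends ori" "set pes \<subseteq> H"
    "\<forall>i<length pes. ori (pes ! i) = (pvs ! i, pvs ! Suc i)"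
  shows "i \<le> length pes \<Longrightarrow> conn (set pes) ends (pvs ! 0) (pvs ! i)"
proof (induction i)
  case 0 then show ?case by simp
next
  case (Suc i)
  have "orientation (set pes) ends ori" using assms(1,2) unfolding orientation_def by blast
  moreover have "dstep ori (set pes) (pvs ! i) (pvs ! Suc i)"
    using assms(3) Suc(2) unfolding dstep_def by (metis Suc_le_lessD nth_mem)
  ultimately have "adjacent (set pes) ends (pvs ! i) (pvs ! Suc i)" by (rule dstep_adjacent)
  with Suc show ?case by (meson Suc_leD rtranclp.rtrancl_into_rtrancl)
qed

lemma cycle_step:
  assumes "directed_cycle ori es vs" "length vs = length es" "set es \<subseteq> H" "m < length es"
  shows "dstep ori H (vs ! m) (vs ! (Suc m mod length es))"
  using assms unfolding directed_cycle_def dstep_def by (metis Suc_eq_plus1 nth_mem subsetD)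

lemma cycle_reach_d:
  assumes "directed_cycle ori es vs" "length vs = length es" "set es \<subseteq> H" "j < length es"
  shows "dreach ori H (vs ! j) (vs ! ((j + d) mod length es))"
proof (induction d)
  case 0 then show ?case using assms(4) by simp
next
  case (Suc d)
  have "(j + d) mod length es < length es" using assms(4) by (intro mod_less_divisor) auto
  from cycle_step[OF assms(1-3) this] have "dstep ori H (vs ! ((j + d) mod length es)) (vs ! ((j + Suc d) mod length es))"
    by (simp add: mod_Suc_eq)
  with Suc show ?case by (rule rtranclp.rtrancl_into_rtrancl)
qed

lemma cycle_reach:
  assumes "directed_cycle ori es vs" "length vs = length es" "set es \<subseteq> H" "f \<in> set es"
  shows "dreach ori H (snd (ori f)) (fst (ori f))"
proof -
  from assms(4) obtain i where i: "i < length es" "es ! i = f" by (auto simp: in_set_conv_nth)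
  let ?k = "length es"
  have o: "ori f = (vs ! i, vs ! ((i + 1) mod ?k))" using assms(1) i unfolding directed_cycle_def by auto
  have j: "(i + 1) mod ?k < ?k" using i by (intro mod_less_divisor) auto
  from cycle_reach_d[OF assms(1-3) j, of "?k - 1"]
  have "dreach ori H (vs ! ((i + 1) mod ?k)) (vs ! (((i + 1) mod ?k + (?k - 1)) mod ?k))" .
  moreover have "((i + 1) mod ?k + (?k - 1)) mod ?k = i"
  proof -
    have "((i + 1) mod ?k + (?k - 1)) mod ?k = (i + 1 + (?k - 1)) mod ?k" by (simp add: mod_add_left_eq)
    also have "i + 1 + (?k - 1) = i + ?k" using i by simp
    finally show ?thesis using i by simp
  qed
  ultimately show ?thesis using o by simp
qed

lemma directed_distinct:
  assumes "directed_cycle ori es vs" "length vs = length es" "distinct vs"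
  shows "distinct es"
proof -
  have "\<forall>i<length es. fst (ori (es ! i)) = vs ! i" using assms(1) unfolding directed_cycle_def by simp
  then show ?thesis using assms(2,3) unfolding distinct_conv_nth by metis
qed



lemma conserved_cong_ori:
  assumes "\<And>e. e \<in> H \<Longrightarrow> ori e = ori2 e"
  shows "conserved V H ori f = conserved V H ori2 f"
proof -
  have "\<And>v. {e \<in> H. snd (ori e) = v} = {e \<in> H. snd (ori2 e) = v}"
       "\<And>v. {e \<in> H. fst (ori e) = v} = {e \<in> H. fst (ori2 e) = v}" using assms by auto
  then show ?thesis unfolding conserved_def by simp
qed

lemma conserved_cong_f:
  assumes "\<And>e. e \<in> H \<Longrightarrow> f e = g e"
  shows "conserved V H ori f = conserved V H ori g"
proof -
  have "\<And>v. (\<Sum>e\<in>{e \<in> H. snd (ori e) = v}. f e) = (\<Sum>e\<in>{e \<in> H. snd (ori e) = v}. g e)"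
       "\<And>v. (\<Sum>e\<in>{e \<in> H. fst (ori e) = v}. f e) = (\<Sum>e\<in>{e \<in> H. fst (ori e) = v}. g e)"
    using assms by (auto intro!: sum.cong)
  then show ?thesis unfolding conserved_def by simp
qed

lemma sum_insert_zero:
  assumes "finite H" "f e = (0::real)"
  shows "(\<Sum>x\<in>{x \<in> insert e H. P x}. f x) = (\<Sum>x\<in>{x \<in> H. P x}. f x)"
proof (cases "P e \<and> e \<notin> H")
  case True
  then have "{x \<in> insert e H. P x} = insert e {x \<in> H. P x}" by auto
  then show ?thesis using assms True by simp
next
  case False
  then have "{x \<in> insert e H. P x} = {x \<in> H. P x}" by auto
  then show ?thesis by simp
qed

lemma conserved_insert_zero:
  assumes "finite H" "f e = 0"
  shows "conserved V (insert e H) ori f = conserved V H ori f"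
  unfolding conserved_def using sum_insert_zero[of H f e] assms by simp

lemma conserved_lin:
  assumes "finite H" "conserved V H ori f" "conserved V H ori g"
  shows "conserved V H ori (\<lambda>e. f e + c * g e)"
  using assms unfolding conserved_def by (simp add: sum.distrib sum_distrib_left[symmetric])

lemma conserved_zero: "conserved V H ori (\<lambda>e. 0)"
  unfolding conserved_def by simp

lemma suc_mod: "i < k \<Longrightarrow> Suc i mod k = (if Suc i = k then 0 else Suc i)"
  by auto

lemma card_shift:
  fixes k :: nat
  shows "card {i. i < k \<and> Q (Suc i mod k)} = card {i. i < k \<and> Q i}"
proof -
  let ?s = "\<lambda>i. Suc i mod k"
  have inj: "inj_on ?s {i. i < k \<and> Q (Suc i mod k)}"
  proof (rule inj_onI)
    fix i j assume "i \<in> {i. i < k \<and> Q (Suc i mod k)}" "j \<in> {i. i < k \<and> Q (Suc i mod k)}" "Suc i mod k = Suc j mod k"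
    then show "i = j" using suc_mod[of i k] suc_mod[of j k] by (auto split: if_splits)
  qed
  have "?s ` {i. i < k \<and> Q (Suc i mod k)} = {i. i < k \<and> Q i}"
  proof
    show "?s ` {i. i < k \<and> Q (Suc i mod k)} \<subseteq> {i. i < k \<and> Q i}"
      by (auto intro!: mod_less_divisor)
  next
    show "{i. i < k \<and> Q i} \<subseteq> ?s ` {i. i < k \<and> Q (Suc i mod k)}"
    proof
      fix i assume i: "i \<in> {i. i < k \<and> Q i}"
      define j where "j = (if i = 0 then k - 1 else i - 1)"
      have "j < k" using i unfolding j_def by auto
      moreover have "Suc j mod k = i" using i unfolding j_def by auto
      ultimately show "i \<in> ?s ` {i. i < k \<and> Q (Suc i mod k)}" using i by force
    qed
  qed
  with card_image[OF inj] show ?thesis by simp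
qed

lemma card_set_filter_nth:
  assumes "distinct es"
  shows "card {e \<in> set es. P e} = card {i. i < length es \<and> P (es ! i)}"
proof -
  have "{e \<in> set es. P e} = (nth es) ` {i. i < length es \<and> P (es ! i)}"
    by (auto simp: in_set_conv_nth)
  moreover have "inj_on (nth es) {i. i < length es \<and> P (es ! i)}"
    using assms by (intro inj_on_nth) auto
  ultimately show ?thesis by (simp add: card_image)
qed

lemma cycle_card:
  assumes "directed_cycle ori es vs" "length vs = length es" "distinct es"
  shows "card {e \<in> set es. snd (ori e) = v} = card {e \<in> set es. fst (ori e) = v}"
proof -
  let ?k = "length es"
  have d: "\<And>i. i < ?k \<Longrightarrow> ori (es ! i) = (vs ! i, vs ! (Suc i mod ?k))"
    using assms(1) unfolding directed_cycle_def by simp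
  have "card {e \<in> set es. snd (ori e) = v} = card {i. i < ?k \<and> snd (ori (es ! i)) = v}"
    by (rule card_set_filter_nth[OF assms(3)])
  also have "{i. i < ?k \<and> snd (ori (es ! i)) = v} = {i. i < ?k \<and> vs ! (Suc i mod ?k) = v}"
    using d by auto
  also have "card \<dots> = card {i. i < ?k \<and> vs ! i = v}" by (rule card_shift)
  also have "{i. i < ?k \<and> vs ! i = v} = {i. i < ?k \<and> fst (ori (es ! i)) = v}"
    using d by auto
  also have "card \<dots> = card {e \<in> set es. fst (ori e) = v}"
    by (rule card_set_filter_nth[OF assms(3), symmetric])
  finally show ?thesis .
qed

lemma sum_indicator_card:
  assumes "finite H" "A \<subseteq> H"
  shows "(\<Sum>e\<in>{e \<in> H. P e}. (if e \<in> A then 1 else 0) :: real) = real (card {e \<in> A. P e})"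
proof -
  have f: "finite {e \<in> H. P e}" using assms(1) by simp
  have "(\<Sum>e\<in>{e \<in> H. P e}. (if e \<in> A then 1 else 0) :: real) = (\<Sum>e\<in>{x \<in> {e \<in> H. P e}. x \<in> A}. 1)"
    by (rule sum.inter_filter[OF f, symmetric])
  also have "{x \<in> {e \<in> H. P e}. x \<in> A} = {e \<in> A. P e}" using assms(2) by auto
  finally show ?thesis by simp
qed

lemma cycle_conserved:
  assumes "finite H" "directed_cycle ori es vs" "length vs = length es" "distinct es" "set es \<subseteq> H"
  shows "conserved V H ori (\<lambda>i. if i \<in> set es then 1 else 0)"
  unfolding conserved_def
  using sum_indicator_card[OF assms(1,5)] cycle_card[OF assms(2,3,4)] by simp

lemma span_conserved:
  fixes n :: nat and es :: "nat \<Rightarrow> 'e list"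
  assumes "finite H" "\<forall>j<n. directed_cycle ori (es j) (vs j) \<and> length (vs j) = length (es j) \<and> distinct (es j) \<and> set (es j) \<subseteq> H"
  shows "conserved V H ori (\<lambda>i. \<Sum>j<n. (if i \<in> set (es j) then 1 else 0) * x j)"
  using assms(2)
proof (induction n)
  case 0 then show ?case using conserved_zero by simp
next
  case (Suc n)
  then have c1: "conserved V H ori (\<lambda>i. \<Sum>j<n. (if i \<in> set (es j) then 1 else 0) * x j)" by simp
  from Suc.prems have "directed_cycle ori (es n) (vs n)" "length (vs n) = length (es n)" "distinct (es n)" "set (es n) \<subseteq> H"
    by auto
  from cycle_conserved[OF assms(1) this] have c2: "conserved V H ori (\<lambda>i. if i \<in> set (es n) then 1 else 0)" .
  from conserved_lin[OF assms(1) c1 c2, of "x n"] show ?case by (simp add: mult.commute)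
qed



definition cls :: "'v set \<Rightarrow> 'e set \<Rightarrow> ('e \<Rightarrow> 'v \<times> 'v) \<Rightarrow> 'v \<Rightarrow> 'v set" where
  "cls V H ends x = {y \<in> V. conn H ends x y}"

lemma components_cls: "components V H ends = cls V H ends ` V"
  unfolding components_def quotient_def cls_def by auto

lemma num_components_cls: "num_components V H ends = card (cls V H ends ` V)"
  unfolding num_components_def components_cls ..

lemma conn_empty: "conn {} ends x y \<longleftrightarrow> x = y"
proof
  assume "conn {} ends x y" then show "x = y"
    by (induction rule: rtranclp_induct) (auto simp: adjacent_def)
qed simp

lemma num_components_empty: "num_components V {} ends = card V"
proof -
  have "cls V {} ends ` V = (\<lambda>x. {x}) ` V" unfolding cls_def conn_empty by auto
  moreover have "inj_on (\<lambda>x. {x}) V" by (auto intro: inj_onI)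
  ultimately show ?thesis unfolding num_components_cls by (simp add: card_image)
qed

lemma num_components_insert_conn:
  assumes "conn S ends (fst (ends e)) (snd (ends e))"
  shows "num_components V (insert e S) ends = num_components V S ends"
proof -
  have "cls V (insert e S) ends = cls V S ends" unfolding cls_def using conn_insert_conn[OF assms] by (intro ext) auto
  then show ?thesis unfolding num_components_cls by simp
qed

lemma conn_rewrite:
  assumes "conn S ends x p" shows "conn S ends x y = conn S ends p y"
  using assms conn_sym[OF assms] rtranclp_trans[of "adjacent S ends" x p y] rtranclp_trans[of "adjacent S ends" p x y]
  by blast

lemma num_components_insert_bridge:
  assumes fin: "finite V" and pq: "ends e = (p, q)" "p \<in> V" "q \<in> V" and nc: "\<not> conn S ends p q"
  shows "num_components V (insert e S) ends + 1 = num_components V S ends"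
proof -
  let ?c = "cls V S ends" and ?c' = "cls V (insert e S) ends"
  let ?A = "?c p" and ?B = "?c q" and ?Q = "?c ` V"
  have key: "conn (insert e S) ends x y \<longleftrightarrow> conn S ends x y \<or> (conn S ends x p \<and> conn S ends q y) \<or> (conn S ends x q \<and> conn S ends p y)" for x y
  proof
    assume h: "conn (insert e S) ends x y" show "conn S ends x y \<or> (conn S ends x p \<and> conn S ends q y) \<or> (conn S ends x q \<and> conn S ends p y)"
      by (rule conn_insert[where p=p and q=q, OF h pq(1)])
  next
    have m: "conn S ends a b \<Longrightarrow> conn (insert e S) ends a b" for a b by (rule conn_mono[rotated]) auto
    have epq: "conn (insert e S) ends p q" using conn_edge[of e "insert e S" ends] pq(1) by simp
    assume "conn S ends x y \<or> (conn S ends x p \<and> conn S ends q y) \<or> (conn S ends x q \<and> conn S ends p y)"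
    then show "conn (insert e S) ends x y"
    proof (elim disjE conjE)
      assume "conn S ends x y" then show ?thesis by (rule m)
    next
      assume a: "conn S ends x p" "conn S ends q y"
      show ?thesis by (rule rtranclp_trans[OF rtranclp_trans[OF m[OF a(1)] epq] m[OF a(2)]])
    next
      assume a: "conn S ends x q" "conn S ends p y"
      show ?thesis by (rule rtranclp_trans[OF rtranclp_trans[OF m[OF a(1)] conn_sym[OF epq]] m[OF a(2)]])
    qed
  qed
  have trans: "conn S ends a b \<Longrightarrow> conn S ends b c \<Longrightarrow> conn S ends a c" for a b c by (rule rtranclp_trans)
  have sym: "conn S ends a b \<Longrightarrow> conn S ends b a" for a b by (rule conn_sym)
  have ncs: "\<not> conn S ends q p" using nc sym by blast
  have AB: "?c' x = ?A \<union> ?B" if "x \<in> V" "conn S ends x p \<or> conn S ends x q" for x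
  proof (cases "conn S ends x p")
    case True
    note e = conn_rewrite[OF True]
    show ?thesis unfolding cls_def key using nc ncs by (auto simp: e)
  next
    case False
    then have h: "conn S ends x q" using that by simp
    note e = conn_rewrite[OF h]
    show ?thesis unfolding cls_def key using nc ncs by (auto simp: e)
  qed
  have other: "?c' x = ?c x" if "x \<in> V" "\<not> conn S ends x p" "\<not> conn S ends x q" for x
    using that unfolding cls_def key by auto
  have pA: "p \<in> ?A" and qB: "q \<in> ?B" using pq unfolding cls_def by auto
  have AneB: "?A \<noteq> ?B" using nc qB unfolding cls_def by auto
  have eq: "?c' ` V = insert (?A \<union> ?B) (?Q - {?A, ?B})"
  proof
    show "?c' ` V \<subseteq> insert (?A \<union> ?B) (?Q - {?A, ?B})"
    proof
      fix C assume "C \<in> ?c' ` V"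
      then obtain x where x: "x \<in> V" "C = ?c' x" by blast
      show "C \<in> insert (?A \<union> ?B) (?Q - {?A, ?B})"
      proof (cases "conn S ends x p \<or> conn S ends x q")
        case True then show ?thesis using AB x by simp
      next
        case False
        then have "C = ?c x" using other x by simp
        moreover have "?c x \<noteq> ?A" "?c x \<noteq> ?B" using False x pA qB unfolding cls_def by (auto dest: sym)
        ultimately show ?thesis using x by auto
      qed
    qed
  next
    show "insert (?A \<union> ?B) (?Q - {?A, ?B}) \<subseteq> ?c' ` V"
    proof
      fix C assume C: "C \<in> insert (?A \<union> ?B) (?Q - {?A, ?B})"
      show "C \<in> ?c' ` V"
      proof (cases "C = ?A \<union> ?B")
        case True
        have "?c' p = ?A \<union> ?B" using AB[of p] pq(2) by simp
        then show ?thesis using True pq(2) by (intro rev_image_eqI[of p]) auto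
      next
        case False
        then obtain x where x: "x \<in> V" "C = ?c x" "C \<noteq> ?A" "C \<noteq> ?B" using C by auto
        have "\<not> conn S ends x p"
        proof
          assume h: "conn S ends x p"
          have "?c x = ?A" unfolding cls_def by (simp add: conn_rewrite[OF h])
          then show False using x by simp
        qed
        moreover have "\<not> conn S ends x q"
        proof
          assume h: "conn S ends x q"
          have "?c x = ?B" unfolding cls_def by (simp add: conn_rewrite[OF h])
          then show False using x by simp
        qed
        ultimately have "C = ?c' x" using other x by simp
        then show ?thesis using x(1) by (intro rev_image_eqI[of x]) auto
      qed
    qed
  qed
  have notin: "?A \<union> ?B \<notin> ?Q - {?A, ?B}"
  proof
    assume "?A \<union> ?B \<in> ?Q - {?A, ?B}"
    then obtain x where x: "x \<in> V" "?A \<union> ?B = ?c x" "?c x \<noteq> ?A" by auto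
    then have "p \<in> ?c x" using pA by auto
    then have h: "conn S ends x p" unfolding cls_def by simp
    have "?c x = ?A" unfolding cls_def by (simp add: conn_rewrite[OF h])
    then show False using x by simp
  qed
  have finQ: "finite ?Q" using fin by simp
  have sub: "{?A, ?B} \<subseteq> ?Q" using pq by auto
  have c2: "card {?A, ?B} = 2" using AneB by simp
  have "card (?Q - {?A, ?B}) = card ?Q - 2" using card_Diff_subset[OF _ sub] c2 by simp
  moreover have "card ?Q \<ge> 2" using card_mono[OF finQ sub] c2 by simp
  moreover have "card (?c' ` V) = card (?Q - {?A, ?B}) + 1"
    unfolding eq using finQ notin by simp
  ultimately show ?thesis unfolding num_components_cls by simp
qed



lemma pair_doubleton:
  assumes "{x1, y1} = {a, b}"
  shows "(x1, y1) = (a, b) \<or> (x1, y1) = (b, a)"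
  using assms by (auto simp: doubleton_eq_iff)

lemma ori_cases:
  assumes "orientation H ends ori" "f \<in> H" "{fst (ends f), snd (ends f)} = {a, b}"
  shows "ori f = (a, b) \<or> ori f = (b, a)"
proof -
  from assms(1,2) have "ori f = ends f \<or> ori f = prod.swap (ends f)" unfolding orientation_def by blast
  moreover from pair_doubleton[OF assms(3)] have "ends f = (a, b) \<or> ends f = (b, a)" by simp
  ultimately show ?thesis by auto
qed

lemma orientation_mono: "orientation H ends ori \<Longrightarrow> H2 \<subseteq> H \<Longrightarrow> orientation H2 ends ori"
  unfolding orientation_def by blast

lemma remove_bridges:
  assumes "finite B" "B \<subseteq> {f \<in> H. sep H ends f \<and> conn (H - {f}) ends p q}" "conn H ends p q"
  shows "conn (H - B) ends p q"
  using assms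
proof (induction B rule: finite_induct)
  case empty then show ?case by simp
next
  case (insert f B)
  then have IH: "conn (H - B) ends p q" and f: "f \<in> H" "sep H ends f" "conn (H - {f}) ends p q" by auto
  have eq: "H - B = insert f (H - insert f B)" using f insert(2) by auto
  let ?a = "fst (ends f)" and ?b = "snd (ends f)"
  have sub: "H - insert f B \<subseteq> H - {f}" by auto
  from IH eq have "conn (insert f (H - insert f B)) ends p q" by simp
  from conn_insert[OF this, of ?a ?b]
  have "conn (H - insert f B) ends p q \<or> (conn (H - insert f B) ends p ?a \<and> conn (H - insert f B) ends ?b q) \<or>
    (conn (H - insert f B) ends p ?b \<and> conn (H - insert f B) ends ?a q)" by simp
  then show ?case
  proof (elim disjE conjE)
    assume "conn (H - insert f B) ends p q" then show ?thesis .
  next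
    assume h: "conn (H - insert f B) ends p ?a" "conn (H - insert f B) ends ?b q"
    have "conn (H - {f}) ends ?a ?b"
      using rtranclp_trans[OF rtranclp_trans[OF conn_sym[OF conn_mono[OF sub h(1)]] f(3)] conn_sym[OF conn_mono[OF sub h(2)]]] .
    then show ?thesis using f(2) unfolding sep_def by simp
  next
    assume h: "conn (H - insert f B) ends p ?b" "conn (H - insert f B) ends ?a q"
    have h3: "conn (H - {f}) ends ?b ?a"
      using rtranclp_trans[OF rtranclp_trans[OF conn_sym[OF conn_mono[OF sub h(1)]] f(3)] conn_sym[OF conn_mono[OF sub h(2)]]] .
    show ?thesis using f(2) conn_sym[OF h3] unfolding sep_def by simp
  qed
qed

lemma reach_main:
  assumes ori: "orientation H ends ori"
    and sepori: "\<forall>f\<in>H. sep H ends f \<longrightarrow> ori f = (if \<not> conn (H - {f}) ends p q then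
        (if conn (H - {f}) ends (snd (ends f)) p then ends f else prod.swap (ends f)) else ori0 f)"
    and cyc: "\<forall>f\<in>H. \<not> sep H ends f \<longrightarrow> dreach ori H (snd (ori f)) (fst (ori f))"
    and pq: "conn H ends p q"
    and Hm: "Hm \<subseteq> H" "\<forall>f\<in>Hm. \<not> (sep H ends f \<and> conn (H - {f}) ends p q)"
    and c: "conn Hm ends q p"
  shows "dreach ori H q p"
proof (rule ccontr)
  assume nq: "\<not> dreach ori H q p"
  let ?S = "{x. dreach ori H x p}"
  have "p \<in> ?S" by simp
  from rtranclp_crossing[of "adjacent Hm ends" q p "\<lambda>x. x \<in> ?S", OF c] nq
  obtain a b where ab: "adjacent Hm ends a b" "a \<notin> ?S" "b \<in> ?S" by auto
  from ab(1) obtain f where f: "f \<in> Hm" "{fst (ends f), snd (ends f)} = {a, b}" unfolding adjacent_def by blast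
  have fH: "f \<in> H" using f Hm by auto
  have "ori f = (a, b) \<or> ori f = (b, a)" by (rule ori_cases[OF ori fH f(2)])
  moreover have "ori f \<noteq> (a, b)"
  proof
    assume "ori f = (a, b)"
    then have "dstep ori H a b" using fH unfolding dstep_def by blast
    then have "dreach ori H a p" using converse_rtranclp_into_rtranclp[of "dstep ori H" a b p] ab(3) by simp
    then show False using ab(2) by simp
  qed
  ultimately have oba: "ori f = (b, a)" by simp
  have sepf: "sep H ends f"
  proof (rule ccontr)
    assume ns: "\<not> sep H ends f"
    have "dreach ori H (snd (ori f)) (fst (ori f))" using cyc fH ns by blast
    then have "dreach ori H a b" using oba by simp
    then have "dreach ori H a p" using rtranclp_trans[of "dstep ori H" a b p] ab(3) by simp
    then show False using ab(2) by simp
  qed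
  then have npq: "\<not> conn (H - {f}) ends p q" using Hm(2) f(1) by blast
  have of: "ori f = (if conn (H - {f}) ends (snd (ends f)) p then ends f else prod.swap (ends f))"
    using sepori fH sepf npq by simp
  have ap: "conn (H - {f}) ends a p"
  proof (cases "conn (H - {f}) ends (snd (ends f)) p")
    case True
    then have "ori f = ends f" using of by simp
    then have "ends f = (b, a)" using oba by simp
    then have "a = snd (ends f)" by simp
    then show ?thesis using True by simp
  next
    case False
    then have "ori f = prod.swap (ends f)" using of by simp
    then have "prod.swap (ends f) = (b, a)" using oba by simp
    then have "a = snd (prod.swap (ends f))" by simp
    then have a: "a = fst (ends f)" by simp
    have "H = insert f (H - {f})" using fH by auto
    with pq have "conn (insert f (H - {f})) ends p q" by simp
    from conn_insert[OF this, of "fst (ends f)" "snd (ends f)"]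
    have "conn (H - {f}) ends p (fst (ends f)) \<and> conn (H - {f}) ends (snd (ends f)) q \<or>
        conn (H - {f}) ends p (snd (ends f)) \<and> conn (H - {f}) ends (fst (ends f)) q" using npq by simp
    then show ?thesis
    proof
      assume h: "conn (H - {f}) ends p (fst (ends f)) \<and> conn (H - {f}) ends (snd (ends f)) q"
      show ?thesis using a conn_sym[OF conjunct1[OF h]] by simp
    next
      assume h: "conn (H - {f}) ends p (snd (ends f)) \<and> conn (H - {f}) ends (fst (ends f)) q"
      have "conn (H - {f}) ends (snd (ends f)) p" using conn_sym[OF conjunct1[OF h]] .
      then show ?thesis using False by simp
    qed
  qed
  from dreach_avoid[of ori H b p f b a] ab(3) fH oba
  have "dreach ori (H - {f}) b p \<or> dreach ori H a p" by simp
  then have "dreach ori (H - {f}) b p" using ab(2) by simp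
  then have bp: "conn (H - {f}) ends b p" using dreach_conn[OF orientation_mono[OF ori Diff_subset]] by blast
  have abc: "conn (H - {f}) ends a b" using rtranclp_trans[OF ap conn_sym[OF bp]] .
  from pair_doubleton[OF f(2)] have "conn (H - {f}) ends (fst (ends f)) (snd (ends f))"
    using abc conn_sym[OF abc] by auto
  then show False using sepf unfolding sep_def by simp
qed



lemma directed_ends:
  assumes "orientation H ends ori" "set es \<subseteq> H" "directed_cycle ori es vs"
  shows "\<forall>i<length es. {fst (ends (es ! i)), snd (ends (es ! i))} = {vs ! i, vs ! ((i + 1) mod length es)}"
proof (intro allI impI)
  fix i assume i: "i < length es"
  then have "es ! i \<in> H" using assms(2) nth_mem by blast
  then have "ori (es ! i) = ends (es ! i) \<or> ori (es ! i) = prod.swap (ends (es ! i))"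
    using assms(1) unfolding orientation_def by blast
  moreover have "ori (es ! i) = (vs ! i, vs ! ((i + 1) mod length es))" using assms(3) i unfolding directed_cycle_def by blast
  ultimately show "{fst (ends (es ! i)), snd (ends (es ! i))} = {vs ! i, vs ! ((i + 1) mod length es)}"
    by (cases "ends (es ! i)") (auto)
qed

lemma new_cycle:
  assumes ori: "orientation H ends ori" and e: "e \<notin> H" "ends e = (p, q)"
    and P: "length pvs = Suc (length pes)" "pvs ! 0 = q" "pvs ! length pes = p" "distinct pvs" "set pes \<subseteq> H"
      "\<forall>i<length pes. ori (pes ! i) = (pvs ! i, pvs ! Suc i)"
  shows "simple_cycle (insert e H) ends (e # pes) (p # butlast pvs) \<and>
         directed_cycle (ori(e := (p, q))) (e # pes) (p # butlast pvs)"
proof -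
  let ?m = "length pes" and ?vs = "p # butlast pvs" and ?es = "e # pes" and ?o = "ori(e := (p, q))"
  have lenb: "length (butlast pvs) = ?m" using P(1) by simp
  have bl: "j < ?m \<Longrightarrow> butlast pvs ! j = pvs ! j" for j using P(1) by (simp add: nth_butlast)
  have dir: "directed_cycle ?o ?es ?vs"
    unfolding directed_cycle_def
  proof (intro allI impI)
    fix i assume i: "i < length ?es"
    show "?o (?es ! i) = (?vs ! i, ?vs ! ((i + 1) mod length ?es))"
    proof (cases i)
      case 0
      show ?thesis
      proof (cases "?m = 0")
        case True
        then show ?thesis using 0 P(2,3) by simp
      next
        case False
        then have "?vs ! 1 = q" using bl[of 0] P(2) by simp
        then show ?thesis using 0 False by simp
      qed
    next
      case (Suc j)
      then have j: "j < ?m" using i by simp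
      have pj: "pes ! j \<in> H" using P(5) j nth_mem by blast
      then have "pes ! j \<noteq> e" using e(1) by auto
      then have o: "?o (?es ! i) = (pvs ! j, pvs ! Suc j)" using P(6) j Suc by simp
      have v1: "?vs ! i = pvs ! j" using Suc bl[OF j] by simp
      show ?thesis
      proof (cases "Suc j < ?m")
        case True
        then have "(i + 1) mod length ?es = Suc (Suc j)" using Suc by simp
        then have "?vs ! ((i + 1) mod length ?es) = pvs ! Suc j" using bl[OF True] by simp
        then show ?thesis using o v1 by simp
      next
        case False
        then have sj: "Suc j = ?m" using j by simp
        then have "(i + 1) mod length ?es = 0" using Suc by simp
        then show ?thesis using o v1 sj P(3) by simp
      qed
    qed
  qed
  have dv: "distinct ?vs"
  proof -
    have pvs_ne: "pvs \<noteq> []" using P(1) by auto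
    have "last pvs = p" using P(1,3) pvs_ne by (simp add: last_conv_nth)
    moreover have "distinct (butlast pvs @ [last pvs])" using P(4) pvs_ne by simp
    ultimately show ?thesis by simp
  qed
  have len: "length ?vs = length ?es" using lenb by simp
  have de: "distinct ?es" by (rule directed_distinct[OF dir len dv])
  have o2: "orientation (insert e H) ends ?o" using ori e(2) unfolding orientation_def by auto
  have sub: "set ?es \<subseteq> insert e H" using P(5) by auto
  have "\<forall>i<length ?es. {fst (ends (?es ! i)), snd (ends (?es ! i))} = {?vs ! i, ?vs ! ((i + 1) mod length ?es)}"
    by (rule directed_ends[OF o2 sub dir])
  then have "simple_cycle (insert e H) ends ?es ?vs"
    unfolding simple_cycle_def using len dv de sub by simp
  then show ?thesis using dir by simp
qed

lemma cut_zero: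
  fixes V :: "'v set" and ori :: "'e \<Rightarrow> 'v \<times> 'v" and f :: "'e \<Rightarrow> real"
  assumes fin: "finite H" and e: "e \<notin> H" "ends e = (p, q)" and V: "\<forall>g\<in>insert e H. fst (ends g) \<in> V \<and> snd (ends g) \<in> V"
    and nc: "\<not> conn H ends p q" and ori: "orientation (insert e H) ends ori"
    and cons: "conserved V (insert e H) ori f"
  shows "f e = 0"
proof -
  let ?E = "insert e H"
  define C where "C = {x \<in> V. conn H ends x p}"
  have finE: "finite ?E" using fin by simp
  have CV: "C \<subseteq> V" unfolding C_def by auto
  have finC: "finite C"
  proof -
    have "C \<subseteq> insert p (fst ` ends ` H \<union> snd ` ends ` H)"
    proof
      fix x assume "x \<in> C"
      then have "conn H ends x p" unfolding C_def by simp
      then show "x \<in> insert p (fst ` ends ` H \<union> snd ` ends ` H)"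
      proof (induction rule: converse_rtranclp_induct)
        case base then show ?case by simp
      next
        case (step y z)
        then obtain g where "g \<in> H" "{fst (ends g), snd (ends g)} = {y, z}" unfolding adjacent_def by blast
        then show ?case by (auto simp: doubleton_eq_iff)
      qed
    qed
    moreover have "finite (insert p (fst ` ends ` H \<union> snd ` ends ` H))" using fin by simp
    ultimately show ?thesis by (rule finite_subset)
  qed
  have sums: "(\<Sum>v\<in>C. (\<Sum>g\<in>{g \<in> ?E. snd (ori g) = v}. f g)) = (\<Sum>v\<in>C. (\<Sum>g\<in>{g \<in> ?E. fst (ori g) = v}. f g))"
  proof (rule sum.cong[OF refl])
    fix v assume "v \<in> C"
    then have "v \<in> V" using CV by auto
    then show "(\<Sum>g\<in>{g \<in> ?E. snd (ori g) = v}. f g) = (\<Sum>g\<in>{g \<in> ?E. fst (ori g) = v}. f g)"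
      using cons unfolding conserved_def by blast
  qed
  have grp1: "(\<Sum>v\<in>C. (\<Sum>g\<in>{g \<in> ?E. snd (ori g) = v}. f g)) = (\<Sum>g\<in>{g \<in> ?E. snd (ori g) \<in> C}. f g)"
  proof -
    have fS: "finite {g \<in> ?E. snd (ori g) \<in> C}" using finE by simp
    have img: "(\<lambda>x. snd (ori x)) ` {g \<in> ?E. snd (ori g) \<in> C} \<subseteq> C" by blast
    have "(\<Sum>g\<in>{g \<in> ?E. snd (ori g) \<in> C}. f g) = (\<Sum>v\<in>C. (\<Sum>g\<in>{x. x \<in> {g \<in> ?E. snd (ori g) \<in> C} \<and> snd (ori x) = v}. f g))"
      by (rule sum.group[OF fS finC img, symmetric])
    also have "\<dots> = (\<Sum>v\<in>C. (\<Sum>g\<in>{g \<in> ?E. snd (ori g) = v}. f g))"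
    proof (rule sum.cong[OF refl])
      fix v assume v: "v \<in> C"
      have "{x. x \<in> {g \<in> ?E. snd (ori g) \<in> C} \<and> snd (ori x) = v} = {g \<in> ?E. snd (ori g) = v}"
        using v by blast
      then show "(\<Sum>g\<in>{x. x \<in> {g \<in> ?E. snd (ori g) \<in> C} \<and> snd (ori x) = v}. f g) = (\<Sum>g\<in>{g \<in> ?E. snd (ori g) = v}. f g)"
        by simp
    qed
    finally show ?thesis by simp
  qed
  have grp2: "(\<Sum>v\<in>C. (\<Sum>g\<in>{g \<in> ?E. fst (ori g) = v}. f g)) = (\<Sum>g\<in>{g \<in> ?E. fst (ori g) \<in> C}. f g)"
  proof -
    have fS: "finite {g \<in> ?E. fst (ori g) \<in> C}" using finE by simp
    have img: "(\<lambda>x. fst (ori x)) ` {g \<in> ?E. fst (ori g) \<in> C} \<subseteq> C" by blast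
    have "(\<Sum>g\<in>{g \<in> ?E. fst (ori g) \<in> C}. f g) = (\<Sum>v\<in>C. (\<Sum>g\<in>{x. x \<in> {g \<in> ?E. fst (ori g) \<in> C} \<and> fst (ori x) = v}. f g))"
      by (rule sum.group[OF fS finC img, symmetric])
    also have "\<dots> = (\<Sum>v\<in>C. (\<Sum>g\<in>{g \<in> ?E. fst (ori g) = v}. f g))"
    proof (rule sum.cong[OF refl])
      fix v assume v: "v \<in> C"
      have "{x. x \<in> {g \<in> ?E. fst (ori g) \<in> C} \<and> fst (ori x) = v} = {g \<in> ?E. fst (ori g) = v}"
        using v by blast
      then show "(\<Sum>g\<in>{x. x \<in> {g \<in> ?E. fst (ori g) \<in> C} \<and> fst (ori x) = v}. f g) = (\<Sum>g\<in>{g \<in> ?E. fst (ori g) = v}. f g)"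
        by simp
    qed
    finally show ?thesis by simp
  qed
  have HC: "snd (ori g) \<in> C \<longleftrightarrow> fst (ori g) \<in> C" if g: "g \<in> H" for g
  proof -
    have ab: "conn H ends (fst (ends g)) (snd (ends g))" by (rule conn_edge[OF g])
    have inV: "fst (ends g) \<in> V" "snd (ends g) \<in> V" using V g by auto
    have "ori g = ends g \<or> ori g = prod.swap (ends g)" using ori g unfolding orientation_def by blast
    moreover have "fst (ends g) \<in> C \<longleftrightarrow> snd (ends g) \<in> C"
      unfolding C_def using inV conn_rewrite[OF ab, of p] by simp
    ultimately show ?thesis by (cases "ori g = ends g") auto
  qed
  have ncq: "\<not> conn H ends q p" using nc conn_sym[of H ends q p] by blast
  have pC: "p \<in> C" and qC: "q \<notin> C" unfolding C_def using V e(2) ncq by auto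
  have M: "{g \<in> ?E. fst (ori g) \<in> C} - {e} = {g \<in> ?E. snd (ori g) \<in> C} - {e}" using HC e(1) by auto
  have "ori e = (p, q) \<or> ori e = (q, p)" using ori e(2) unfolding orientation_def by auto
  then show ?thesis
  proof
    assume oe: "ori e = (p, q)"
    have eA: "e \<in> {g \<in> ?E. fst (ori g) \<in> C}" using oe pC by simp
    have A: "{g \<in> ?E. fst (ori g) \<in> C} = insert e ({g \<in> ?E. snd (ori g) \<in> C} - {e})"
      by (subst M[symmetric]) (rule insert_Diff[OF eA, symmetric])
    have B: "e \<notin> {g \<in> ?E. snd (ori g) \<in> C}" using oe qC by simp
    from sums[unfolded grp1 grp2] A B finE show ?thesis by (simp add: sum.insert_remove)
  next
    assume oe: "ori e = (q, p)"
    have eA: "e \<in> {g \<in> ?E. snd (ori g) \<in> C}" using oe pC by simp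
    have A: "{g \<in> ?E. snd (ori g) \<in> C} = insert e ({g \<in> ?E. fst (ori g) \<in> C} - {e})"
      by (subst M) (rule insert_Diff[OF eA, symmetric])
    have B: "e \<notin> {g \<in> ?E. fst (ori g) \<in> C}" using oe qC by simp
    from sums[unfolded grp1 grp2] A B finE show ?thesis by (simp add: sum.insert_remove)
  qed
qed



definition Inv :: "'v set \<Rightarrow> 'e set \<Rightarrow> ('e \<Rightarrow> 'v \<times> 'v) \<Rightarrow> ('e \<Rightarrow> 'v \<times> 'v) \<Rightarrow> bool" where
  "Inv V H ends ori0 \<longleftrightarrow> (\<exists>ori (es :: nat \<Rightarrow> 'e list) (vs :: nat \<Rightarrow> 'v list) (n::nat).
     orientation H ends ori \<and> n = card H + num_components V H ends - card V \<and>
     card V \<le> card H + num_components V H ends \<and>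
     (\<forall>f\<in>H. sep H ends f \<longrightarrow> ori f = ori0 f) \<and>
     (\<forall>f\<in>H. \<not> sep H ends f \<longrightarrow> (\<exists>j<n. f \<in> set (es j))) \<and>
     (\<forall>j<n. simple_cycle H ends (es j) (vs j) \<and> directed_cycle ori (es j) (vs j)) \<and>
     (\<forall>a::nat \<Rightarrow> real. (\<forall>i\<in>H. (\<Sum>j<n. a j * (if i \<in> set (es j) then 1 else 0)) = 0) \<longrightarrow> (\<forall>j<n. a j = 0)) \<and>
     (\<forall>f::'e \<Rightarrow> real. conserved V H ori f \<longrightarrow>
        (\<exists>x::nat \<Rightarrow> real. \<forall>i\<in>H. f i = (\<Sum>j<n. (if i \<in> set (es j) then 1 else 0) * x j))))"

lemma sep_insert_mono: "sep (insert e H) ends f \<Longrightarrow> sep H ends f"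
  unfolding sep_def using conn_mono[of "H - {f}" "insert e H - {f}" ends] by blast

lemma nonsep_bridge:
  assumes "\<not> conn H ends p q" "ends e = (p, q)" "f \<in> H" "\<not> sep (insert e H) ends f"
  shows "\<not> sep H ends f"
proof
  assume s: "sep H ends f"
  let ?a = "fst (ends f)" and ?b = "snd (ends f)"
  have "e \<noteq> f" using assms(1) s assms(2,3) conn_edge[of f H ends] by auto
  then have eq: "insert e H - {f} = insert e (H - {f})" by auto
  from assms(4) have c: "conn (insert e (H - {f})) ends ?a ?b" unfolding sep_def eq by simp
  have sub: "H - {f} \<subseteq> H" by auto
  have ab: "conn H ends ?a ?b" by (rule conn_edge[OF assms(3)])
  from conn_insert[OF c assms(2)] have
    "conn (H - {f}) ends ?a ?b \<or> (conn (H - {f}) ends ?a p \<and> conn (H - {f}) ends q ?b) \<or>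
     (conn (H - {f}) ends ?a q \<and> conn (H - {f}) ends p ?b)" .
  then show False
  proof (elim disjE conjE)
    assume "conn (H - {f}) ends ?a ?b" then show False using s unfolding sep_def by simp
  next
    assume h: "conn (H - {f}) ends ?a p" "conn (H - {f}) ends q ?b"
    have "conn H ends p q"
      using rtranclp_trans[OF rtranclp_trans[OF conn_sym[OF conn_mono[OF sub h(1)]] ab] conn_sym[OF conn_mono[OF sub h(2)]]] .
    then show False using assms(1) by simp
  next
    assume h: "conn (H - {f}) ends ?a q" "conn (H - {f}) ends p ?b"
    have "conn H ends p q"
      using rtranclp_trans[OF rtranclp_trans[OF conn_mono[OF sub h(2)] conn_sym[OF ab]] conn_mono[OF sub h(1)]] .
    then show False using assms(1) by simp
  qed
qed

lemma sep_conn_pq: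
  assumes "conn H ends p q" "ends e = (p, q)" "f \<in> H" "e \<notin> H" "sep (insert e H) ends f"
  shows "conn (H - {f}) ends p q"
proof (rule ccontr)
  assume n: "\<not> conn (H - {f}) ends p q"
  let ?a = "fst (ends f)" and ?b = "snd (ends f)"
  have Hf: "H = insert f (H - {f})" using assms(3) by auto
  have ef: "e \<noteq> f" using assms(3,4) by auto
  then have eq: "insert e H - {f} = insert e (H - {f})" by auto
  have sub: "H - {f} \<subseteq> insert e H - {f}" by auto
  have epq: "conn (insert e H - {f}) ends p q" using conn_edge[of e "insert e H - {f}" ends] ef assms(2) by simp
  from assms(1) Hf have "conn (insert f (H - {f})) ends p q" by simp
  from conn_insert[OF this, of ?a ?b] n have
    "(conn (H - {f}) ends p ?a \<and> conn (H - {f}) ends ?b q) \<or> (conn (H - {f}) ends p ?b \<and> conn (H - {f}) ends ?a q)"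
    by simp
  then have "conn (insert e H - {f}) ends ?a ?b"
  proof
    assume h: "conn (H - {f}) ends p ?a \<and> conn (H - {f}) ends ?b q"
    show ?thesis using rtranclp_trans[OF rtranclp_trans[OF conn_sym[OF conn_mono[OF sub conjunct1[OF h]]] epq] conn_sym[OF conn_mono[OF sub conjunct2[OF h]]]] .
  next
    assume h: "conn (H - {f}) ends p ?b \<and> conn (H - {f}) ends ?a q"
    show ?thesis using rtranclp_trans[OF rtranclp_trans[OF conn_mono[OF sub conjunct2[OF h]] conn_sym[OF epq]] conn_mono[OF sub conjunct1[OF h]]] .
  qed
  then show False using assms(5) unfolding sep_def by simp
qed

lemma sep_new_cross:
  assumes "conn (H - {f}) ends p q" "ends e = (p, q)" "f \<in> H" "e \<notin> H" "sep H ends f"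
  shows "sep (insert e H) ends f"
proof -
  have ef: "e \<noteq> f" using assms(3,4) by auto
  then have eq: "insert e H - {f} = insert e (H - {f})" by auto
  have "conn (H - {f}) ends (fst (ends e)) (snd (ends e))" using assms(1,2) by simp
  from conn_insert_conn[OF this] assms(5) show ?thesis unfolding sep_def eq by simp
qed

lemma step_bridge:
  fixes V :: "'v set" and H :: "'e set"
  assumes fin: "finite V" "finite H" and e: "e \<notin> H" "ends e = (p, q)" "p \<in> V" "q \<in> V"
    and Vends: "\<forall>g\<in>insert e H. fst (ends g) \<in> V \<and> snd (ends g) \<in> V"
    and nc: "\<not> conn H ends p q"
    and IH: "\<And>ori0. orientation H ends ori0 \<Longrightarrow> Inv V H ends ori0"
    and o0: "orientation (insert e H) ends ori0"
  shows "Inv V (insert e H) ends ori0"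
proof -
  have "orientation H ends ori0" using o0 unfolding orientation_def by blast
  from IH[OF this] obtain ori es vs n where
    I1: "orientation H ends ori" and I2: "n = card H + num_components V H ends - card V" and
    I3: "card V \<le> card H + num_components V H ends" and
    I4: "\<forall>f\<in>H. sep H ends f \<longrightarrow> ori f = ori0 f" and
    I5: "\<forall>f\<in>H. \<not> sep H ends f \<longrightarrow> (\<exists>j<n. f \<in> set (es j))" and
    I6: "\<forall>j<n. simple_cycle H ends (es j) (vs j) \<and> directed_cycle ori (es j) (vs j)" and
    I7: "\<forall>a::nat \<Rightarrow> real. (\<forall>i\<in>H. (\<Sum>j<n. a j * (if i \<in> set (es j) then 1 else 0)) = 0) \<longrightarrow> (\<forall>j<n. a j = 0)" and
    I8: "\<forall>f::'e \<Rightarrow> real. conserved V H ori f \<longrightarrow>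
        (\<exists>x::nat \<Rightarrow> real. \<forall>i\<in>H. f i = (\<Sum>j<n. (if i \<in> set (es j) then 1 else 0) * x j))"
    unfolding Inv_def by blast
  define ori' where "ori' = ori(e := ori0 e)"
  let ?E = "insert e H"
  have agree: "\<And>g. g \<in> H \<Longrightarrow> ori' g = ori g" unfolding ori'_def using e(1) by auto
  have esH: "\<And>j. j < n \<Longrightarrow> set (es j) \<subseteq> H" using I6 unfolding simple_cycle_def by blast
  have eN: "\<And>j. j < n \<Longrightarrow> e \<notin> set (es j)" using esH e(1) by blast
  have c1: "num_components V ?E ends + 1 = num_components V H ends"
    by (rule num_components_insert_bridge[OF fin(1) e(2,3,4) nc])
  have cardE: "card ?E = card H + 1" using fin(2) e(1) by simp
  have J1: "orientation ?E ends ori'" using I1 o0 unfolding orientation_def ori'_def by auto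
  have J2: "n = card ?E + num_components V ?E ends - card V" using I2 c1 cardE by simp
  have J3: "card V \<le> card ?E + num_components V ?E ends" using I3 c1 cardE by simp
  have J4: "\<forall>f\<in>?E. sep ?E ends f \<longrightarrow> ori' f = ori0 f"
  proof (intro ballI impI)
    fix f assume f: "f \<in> ?E" "sep ?E ends f"
    show "ori' f = ori0 f"
    proof (cases "f = e")
      case True then show ?thesis unfolding ori'_def by simp
    next
      case False
      then have fH: "f \<in> H" using f by simp
      have "sep H ends f" by (rule sep_insert_mono[OF f(2)])
      then show ?thesis using I4 fH agree by simp
    qed
  qed
  have J5: "\<forall>f\<in>?E. \<not> sep ?E ends f \<longrightarrow> (\<exists>j<n. f \<in> set (es j))"
  proof (intro ballI impI)
    fix f assume f: "f \<in> ?E" "\<not> sep ?E ends f"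
    show "\<exists>j<n. f \<in> set (es j)"
    proof (cases "f = e")
      case True
      have "?E - {e} = H" using e(1) by auto
      then have "sep ?E ends e" unfolding sep_def using nc e(2) by simp
      then show ?thesis using f True by simp
    next
      case False
      then have fH: "f \<in> H" using f by simp
      have "\<not> sep H ends f" by (rule nonsep_bridge[OF nc e(2) fH f(2)])
      then show ?thesis using I5 fH by blast
    qed
  qed
  have J6: "\<forall>j<n. simple_cycle ?E ends (es j) (vs j) \<and> directed_cycle ori' (es j) (vs j)"
  proof (intro allI impI)
    fix j assume j: "j < n"
    have "simple_cycle ?E ends (es j) (vs j)" using I6 j unfolding simple_cycle_def by auto
    moreover have "directed_cycle ori' (es j) (vs j)"
    proof -
      have "\<And>i. i < length (es j) \<Longrightarrow> ori' (es j ! i) = ori (es j ! i)"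
        using agree esH[OF j] nth_mem by blast
      then show ?thesis using I6 j unfolding directed_cycle_def by simp
    qed
    ultimately show "simple_cycle ?E ends (es j) (vs j) \<and> directed_cycle ori' (es j) (vs j)" by simp
  qed
  have J7: "\<forall>a::nat \<Rightarrow> real. (\<forall>i\<in>?E. (\<Sum>j<n. a j * (if i \<in> set (es j) then 1 else 0)) = 0) \<longrightarrow> (\<forall>j<n. a j = 0)"
    using I7 by simp
  have J8: "\<forall>f::'e \<Rightarrow> real. conserved V ?E ori' f \<longrightarrow>
        (\<exists>x::nat \<Rightarrow> real. \<forall>i\<in>?E. f i = (\<Sum>j<n. (if i \<in> set (es j) then 1 else 0) * x j))"
  proof (intro allI impI)
    fix f :: "'e \<Rightarrow> real" assume cf: "conserved V ?E ori' f"
    have f0: "f e = 0" by (rule cut_zero[OF fin(2) e(1,2) Vends nc J1 cf])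
    have "conserved V H ori' f" using cf conserved_insert_zero[of H f e V ori'] fin(2) f0 by simp
    then have "conserved V H ori f" using conserved_cong_ori[of H ori' ori V f] agree by simp
    then obtain x where x: "\<forall>i\<in>H. f i = (\<Sum>j<n. (if i \<in> set (es j) then 1 else 0) * x j)" using I8 by blast
    have "\<forall>i\<in>?E. f i = (\<Sum>j<n. (if i \<in> set (es j) then 1 else 0) * x j)"
      using x f0 eN by simp
    then show "\<exists>x::nat \<Rightarrow> real. \<forall>i\<in>?E. f i = (\<Sum>j<n. (if i \<in> set (es j) then 1 else 0) * x j)" by blast
  qed
  show ?thesis unfolding Inv_def
    apply (rule exI[of _ ori'], rule exI[of _ es], rule exI[of _ vs], rule exI[of _ n])
    using J1 J2 J3 J4 J5 J6 J7 J8 by blast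
qed



lemma step_conn:
  fixes V :: "'v set" and H :: "'e set"
  assumes fin: "finite V" "finite H" and e: "e \<notin> H" "ends e = (p, q)" "p \<in> V" "q \<in> V"
    and Vends: "\<forall>g\<in>insert e H. fst (ends g) \<in> V \<and> snd (ends g) \<in> V"
    and pc: "conn H ends p q"
    and IH: "\<And>ori0. orientation H ends ori0 \<Longrightarrow> Inv V H ends ori0"
    and o0: "orientation (insert e H) ends ori0"
  shows "Inv V (insert e H) ends ori0"
proof -
  define ori0'' where "ori0'' = (\<lambda>f. if \<not> conn (H - {f}) ends p q then
        (if conn (H - {f}) ends (snd (ends f)) p then ends f else prod.swap (ends f)) else ori0 f)"
  have "orientation H ends ori0''" using o0 unfolding orientation_def ori0''_def by auto
  from IH[OF this] obtain ori es vs n where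
    I1: "orientation H ends ori" and I2: "n = card H + num_components V H ends - card V" and
    I3: "card V \<le> card H + num_components V H ends" and
    I4: "\<forall>f\<in>H. sep H ends f \<longrightarrow> ori f = ori0'' f" and
    I5: "\<forall>f\<in>H. \<not> sep H ends f \<longrightarrow> (\<exists>j<n. f \<in> set (es j))" and
    I6: "\<forall>j<n. simple_cycle H ends (es j) (vs j) \<and> directed_cycle ori (es j) (vs j)" and
    I7: "\<forall>a::nat \<Rightarrow> real. (\<forall>i\<in>H. (\<Sum>j<n. a j * (if i \<in> set (es j) then 1 else 0)) = 0) \<longrightarrow> (\<forall>j<n. a j = 0)" and
    I8: "\<forall>f::'e \<Rightarrow> real. conserved V H ori f \<longrightarrow>
        (\<exists>x::nat \<Rightarrow> real. \<forall>i\<in>H. f i = (\<Sum>j<n. (if i \<in> set (es j) then 1 else 0) * x j))"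
    unfolding Inv_def by blast
  let ?E = "insert e H"
  have esH: "\<And>j. j < n \<Longrightarrow> set (es j) \<subseteq> H" using I6 unfolding simple_cycle_def by blast
  have eN: "\<And>j. j < n \<Longrightarrow> e \<notin> set (es j)" using esH e(1) by blast
  have cycH: "\<forall>f\<in>H. \<not> sep H ends f \<longrightarrow> dreach ori H (snd (ori f)) (fst (ori f))"
  proof (intro ballI impI)
    fix f assume f: "f \<in> H" "\<not> sep H ends f"
    then obtain j where j: "j < n" "f \<in> set (es j)" using I5 by blast
    from I6 j(1) have "simple_cycle H ends (es j) (vs j)" "directed_cycle ori (es j) (vs j)" by auto
    then show "dreach ori H (snd (ori f)) (fst (ori f))"
      using cycle_reach[of ori "es j" "vs j" H f] j(2) unfolding simple_cycle_def by simp
  qed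
  define B where "B = {f \<in> H. sep H ends f \<and> conn (H - {f}) ends p q}"
  have finB: "finite B" using fin(2) unfolding B_def by simp
  have cHm: "conn (H - B) ends p q" by (rule remove_bridges[OF finB _ pc]) (simp add: B_def)
  have HmH: "H - B \<subseteq> H" by auto
  have Hm2: "\<forall>f\<in>H - B. \<not> (sep H ends f \<and> conn (H - {f}) ends p q)" unfolding B_def by blast
  have sepori: "\<forall>f\<in>H. sep H ends f \<longrightarrow> ori f = (if \<not> conn (H - {f}) ends p q then
        (if conn (H - {f}) ends (snd (ends f)) p then ends f else prod.swap (ends f)) else ori0 f)"
    using I4 unfolding ori0''_def by simp
  have reach: "dreach ori H q p"
    by (rule reach_main[OF I1 sepori cycH pc HmH Hm2 conn_sym[OF cHm]])
  from dreach_path[OF reach] obtain pes pvs where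
    P: "length pvs = Suc (length pes)" "pvs ! 0 = q" "pvs ! length pes = p" "distinct pvs" "set pes \<subseteq> H"
      "\<forall>i<length pes. ori (pes ! i) = (pvs ! i, pvs ! Suc i)" by blast
  have NC: "simple_cycle ?E ends (e # pes) (p # butlast pvs) \<and> directed_cycle (ori(e := (p, q))) (e # pes) (p # butlast pvs)"
    by (rule new_cycle[OF I1 e(1,2) P])
  define ori' where "ori' = ori(e := (p, q))"
  define es' where "es' = es(n := e # pes)"
  define vs' where "vs' = vs(n := p # butlast pvs)"
  have agree: "\<And>g. g \<in> H \<Longrightarrow> ori' g = ori g" unfolding ori'_def using e(1) by auto
  have cardE: "card ?E = card H + 1" using fin(2) e(1) by simp
  have c1: "num_components V ?E ends = num_components V H ends"
    by (rule num_components_insert_conn) (use pc e(2) in simp)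
  have J1: "orientation ?E ends ori'" using I1 e(2) unfolding orientation_def ori'_def by auto
  have J2: "Suc n = card ?E + num_components V ?E ends - card V" using I2 I3 c1 cardE by simp
  have J3: "card V \<le> card ?E + num_components V ?E ends" using I3 c1 cardE by simp
  have J4: "\<forall>f\<in>?E. sep ?E ends f \<longrightarrow> ori' f = ori0 f"
  proof (intro ballI impI)
    fix f assume f: "f \<in> ?E" "sep ?E ends f"
    show "ori' f = ori0 f"
    proof (cases "f = e")
      case True
      have "?E - {e} = H" using e(1) by auto
      then have "\<not> sep ?E ends e" unfolding sep_def using pc e(2) by simp
      then show ?thesis using f True by simp
    next
      case False
      then have fH: "f \<in> H" using f by simp
      have s: "sep H ends f" by (rule sep_insert_mono[OF f(2)])
      have "conn (H - {f}) ends p q" by (rule sep_conn_pq[OF pc e(2) fH e(1) f(2)])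
      then have "ori0'' f = ori0 f" unfolding ori0''_def by simp
      then show ?thesis using I4 fH s agree by simp
    qed
  qed
  have J5: "\<forall>f\<in>?E. \<not> sep ?E ends f \<longrightarrow> (\<exists>j<Suc n. f \<in> set (es' j))"
  proof (intro ballI impI)
    fix f assume f: "f \<in> ?E" "\<not> sep ?E ends f"
    show "\<exists>j<Suc n. f \<in> set (es' j)"
    proof (cases "f = e")
      case True then show ?thesis unfolding es'_def by (intro exI[of _ n]) simp
    next
      case False
      then have fH: "f \<in> H" using f by simp
      show ?thesis
      proof (cases "sep H ends f")
        case False
        then obtain j where "j < n" "f \<in> set (es j)" using I5 fH by blast
        then show ?thesis unfolding es'_def by (intro exI[of _ j]) simp
      next
        case True
        have ncf: "\<not> conn (H - {f}) ends p q"
        proof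
          assume "conn (H - {f}) ends p q"
          from sep_new_cross[OF this e(2) fH e(1) True] f(2) show False by simp
        qed
        have "f \<in> set pes"
        proof (rule ccontr)
          assume nf: "f \<notin> set pes"
          then have sub: "set pes \<subseteq> H - {f}" using P(5) by auto
          have oH: "orientation (H - {f}) ends ori" using I1 unfolding orientation_def by blast
          have "conn (set pes) ends (pvs ! 0) (pvs ! length pes)"
            by (rule path_conn[OF oH sub P(6)]) simp
          then have "conn (H - {f}) ends q p" using conn_mono[OF sub] P(2,3) by simp
          then show False using ncf conn_sym[of "H - {f}" ends q p] by simp
        qed
        then show ?thesis unfolding es'_def by (intro exI[of _ n]) simp
      qed
    qed
  qed
  have J6: "\<forall>j<Suc n. simple_cycle ?E ends (es' j) (vs' j) \<and> directed_cycle ori' (es' j) (vs' j)"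
  proof (intro allI impI)
    fix j assume j: "j < Suc n"
    show "simple_cycle ?E ends (es' j) (vs' j) \<and> directed_cycle ori' (es' j) (vs' j)"
    proof (cases "j = n")
      case True then show ?thesis using NC unfolding es'_def vs'_def ori'_def by simp
    next
      case False
      then have j: "j < n" using j by simp
      have "simple_cycle ?E ends (es j) (vs j)" using I6 j unfolding simple_cycle_def by auto
      moreover have "directed_cycle ori' (es j) (vs j)"
      proof -
        have "\<And>i. i < length (es j) \<Longrightarrow> ori' (es j ! i) = ori (es j ! i)"
          using agree esH[OF j] nth_mem by blast
        then show ?thesis using I6 j unfolding directed_cycle_def by simp
      qed
      ultimately show ?thesis using False unfolding es'_def vs'_def by simp
    qed
  qed
  have split1: "(\<Sum>j<Suc n. c j * (if i \<in> set (es' j) then 1 else 0)) =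
      (\<Sum>j<n. c j * (if i \<in> set (es j) then 1 else 0)) + c n * (if i \<in> set (e # pes) then 1 else 0)"
    for c :: "nat \<Rightarrow> real" and i
  proof -
    have "(\<Sum>j<n. c j * (if i \<in> set (es' j) then 1 else 0)) = (\<Sum>j<n. c j * (if i \<in> set (es j) then 1 else 0))"
      by (rule sum.cong) (auto simp: es'_def)
    then show ?thesis by (simp add: es'_def)
  qed
  have split2: "(\<Sum>j<Suc n. (if i \<in> set (es' j) then 1 else 0) * c j) =
      (\<Sum>j<n. (if i \<in> set (es j) then 1 else 0) * c j) + (if i \<in> set (e # pes) then 1 else 0) * c n"
    for c :: "nat \<Rightarrow> real" and i
    using split1[of c i] by (simp add: mult.commute)
  have zeroe: "(\<Sum>j<n. c j * (if e \<in> set (es j) then 1 else 0)) = 0" for c :: "nat \<Rightarrow> real"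
    using eN by (intro sum.neutral) auto
  have J7: "\<forall>a::nat \<Rightarrow> real. (\<forall>i\<in>?E. (\<Sum>j<Suc n. a j * (if i \<in> set (es' j) then 1 else 0)) = 0) \<longrightarrow> (\<forall>j<Suc n. a j = 0)"
  proof (intro allI impI)
    fix a :: "nat \<Rightarrow> real" and j
    assume h: "\<forall>i\<in>?E. (\<Sum>j<Suc n. a j * (if i \<in> set (es' j) then 1 else 0)) = 0" and j: "j < Suc n"
    have an: "a n = 0" using h[rule_format, of e] split1[of a e] zeroe[of a] by simp
    have "\<forall>i\<in>H. (\<Sum>j<n. a j * (if i \<in> set (es j) then 1 else 0)) = 0"
    proof
      fix i assume "i \<in> H"
      then show "(\<Sum>j<n. a j * (if i \<in> set (es j) then 1 else 0)) = 0"
        using h[rule_format, of i] split1[of a i] an by simp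
    qed
    then have "\<forall>j<n. a j = 0" using I7 by blast
    then show "a j = 0" using an j less_Suc_eq by auto
  qed
  have J8: "\<forall>f::'e \<Rightarrow> real. conserved V ?E ori' f \<longrightarrow>
        (\<exists>x::nat \<Rightarrow> real. \<forall>i\<in>?E. f i = (\<Sum>j<Suc n. (if i \<in> set (es' j) then 1 else 0) * x j))"
  proof (intro allI impI)
    fix f :: "'e \<Rightarrow> real" assume cf: "conserved V ?E ori' f"
    let ?chi = "\<lambda>i. if i \<in> set (e # pes) then 1 else (0::real)"
    have finE: "finite ?E" using fin(2) by simp
    have sc: "simple_cycle ?E ends (e # pes) (p # butlast pvs)" and dc: "directed_cycle ori' (e # pes) (p # butlast pvs)"
      using NC unfolding ori'_def by auto
    have cchi: "conserved V ?E ori' ?chi"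
      by (rule cycle_conserved[OF finE dc]) (use sc in \<open>auto simp: simple_cycle_def\<close>)
    define g where "g = (\<lambda>i. f i + (- f e) * ?chi i)"
    have cg: "conserved V ?E ori' g" unfolding g_def by (rule conserved_lin[OF finE cf cchi])
    have g0: "g e = 0" unfolding g_def by simp
    have "conserved V H ori' g" using cg conserved_insert_zero[of H g e V ori'] fin(2) g0 by simp
    then have "conserved V H ori g" using conserved_cong_ori[of H ori' ori V g] agree by simp
    then obtain x where x: "\<forall>i\<in>H. g i = (\<Sum>j<n. (if i \<in> set (es j) then 1 else 0) * x j)" using I8 by blast
    define x' where "x' = x(n := f e)"
    have xx: "(\<Sum>j<n. (if i \<in> set (es j) then 1 else 0) * x' j) = (\<Sum>j<n. (if i \<in> set (es j) then 1 else 0) * x j)" for i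
      by (rule sum.cong) (auto simp: x'_def)
    have "\<forall>i\<in>?E. f i = (\<Sum>j<Suc n. (if i \<in> set (es' j) then 1 else 0) * x' j)"
    proof
      fix i assume i: "i \<in> ?E"
      show "f i = (\<Sum>j<Suc n. (if i \<in> set (es' j) then 1 else 0) * x' j)"
      proof (cases "i = e")
        case True
        have "(\<Sum>j<n. (if e \<in> set (es j) then 1 else 0) * x j) = 0"
          using eN by (intro sum.neutral) auto
        then show ?thesis using True split2[of e x'] xx[of e] by (simp add: x'_def)
      next
        case False
        then have iH: "i \<in> H" using i by simp
        have "f i = g i + f e * ?chi i" unfolding g_def by simp
        then show ?thesis using split2[of i x'] xx[of i] x iH by (simp add: x'_def)
      qed
    qed
    then show "\<exists>x::nat \<Rightarrow> real. \<forall>i\<in>?E. f i = (\<Sum>j<Suc n. (if i \<in> set (es' j) then 1 else 0) * x j)" by blast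
  qed
  show ?thesis unfolding Inv_def
    apply (rule exI[of _ ori'], rule exI[of _ es'], rule exI[of _ vs'], rule exI[of _ "Suc n"])
    using J1 J2 J3 J4 J5 J6 J7 J8 by blast
qed



lemma Inv_all:
  fixes V :: "'v set" and H :: "'e set"
  assumes "finite V" "finite H"
  shows "(\<forall>g\<in>H. fst (ends g) \<in> V \<and> snd (ends g) \<in> V) \<Longrightarrow> orientation H ends ori0 \<Longrightarrow> Inv V H ends ori0"
  using assms(2)
proof (induction H arbitrary: ori0 rule: finite_induct)
  case empty
  show ?case unfolding Inv_def
    apply (rule exI[of _ ori0], rule exI[of _ "\<lambda>_. []"], rule exI[of _ "\<lambda>_. []"], rule exI[of _ 0])
    by (simp add: num_components_empty orientation_def conserved_def)
next
  case (insert e H)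
  obtain p q where pq: "ends e = (p, q)" by (cases "ends e")
  have "fst (ends e) \<in> V \<and> snd (ends e) \<in> V" using insert(4) by blast
  then have pV: "p \<in> V" "q \<in> V" using pq by simp_all
  have IH: "\<And>ori0. orientation H ends ori0 \<Longrightarrow> Inv V H ends ori0" using insert(3,4) by simp
  show ?case
  proof (cases "conn H ends p q")
    case True
    show ?thesis by (rule step_conn[OF assms(1) insert(1,2) pq pV insert(4) True IH insert(5)])
  next
    case False
    show ?thesis by (rule step_bridge[OF assms(1) insert(1,2) pq pV insert(4) False IH insert(5)])
  qed
qed

theorem proposition1:
  fixes V :: "'v set" and E :: "'e set" and ends :: "'e \<Rightarrow> 'v \<times> 'v"
  assumes "multigraph V E ends"
  defines "L \<equiv> card E + num_components V E ends - card V"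
  shows "\<exists>ori (es :: nat \<Rightarrow> 'e list) (vs :: nat \<Rightarrow> 'v list).
           orientation E ends ori \<and>
           (\<forall>j < L. simple_cycle E ends (es j) (vs j) \<and> directed_cycle ori (es j) (vs j)) \<and>
           (\<forall>a :: nat \<Rightarrow> real.
              (\<forall>i\<in>E. (\<Sum>j<L. a j * (if i \<in> set (es j) then 1 else 0)) = 0)
              \<longrightarrow> (\<forall>j<L. a j = 0)) \<and>
           (\<forall>f :: 'e \<Rightarrow> real. conserved V E ori f \<longleftrightarrow>
              (\<exists>x :: nat \<Rightarrow> real. \<forall>i\<in>E.
                 f i = (\<Sum>j<L. (if i \<in> set (es j) then 1 else 0) * x j)))"
proof -
  have fin: "finite V" "finite E" and Vends: "\<forall>g\<in>E. fst (ends g) \<in> V \<and> snd (ends g) \<in> V"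
    using assms(1) unfolding multigraph_def by auto
  have "orientation E ends ends" unfolding orientation_def by simp
  from Inv_all[OF fin Vends this] obtain ori es vs n where
    I1: "orientation E ends ori" and I2: "n = card E + num_components V E ends - card V" and
    I6: "\<forall>j<n. simple_cycle E ends (es j) (vs j) \<and> directed_cycle ori (es j) (vs j)" and
    I7: "\<forall>a::nat \<Rightarrow> real. (\<forall>i\<in>E. (\<Sum>j<n. a j * (if i \<in> set (es j) then 1 else 0)) = 0) \<longrightarrow> (\<forall>j<n. a j = 0)" and
    I8: "\<forall>f::'e \<Rightarrow> real. conserved V E ori f \<longrightarrow>
        (\<exists>x::nat \<Rightarrow> real. \<forall>i\<in>E. f i = (\<Sum>j<n. (if i \<in> set (es j) then 1 else 0) * x j))"
    unfolding Inv_def by blast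
  have nL: "n = L" using I2 unfolding L_def by simp
  have bk: "\<And>f :: 'e \<Rightarrow> real. (\<exists>x :: nat \<Rightarrow> real. \<forall>i\<in>E. f i = (\<Sum>j<n. (if i \<in> set (es j) then 1 else 0) * x j)) \<Longrightarrow> conserved V E ori f"
  proof -
    fix f :: "'e \<Rightarrow> real"
    assume "\<exists>x :: nat \<Rightarrow> real. \<forall>i\<in>E. f i = (\<Sum>j<n. (if i \<in> set (es j) then 1 else 0) * x j)"
    then obtain x where x: "\<forall>i\<in>E. f i = (\<Sum>j<n. (if i \<in> set (es j) then 1 else 0) * x j)" by blast
    have cyc: "\<forall>j<n. directed_cycle ori (es j) (vs j) \<and> length (vs j) = length (es j) \<and> distinct (es j) \<and> set (es j) \<subseteq> E"
      using I6 unfolding simple_cycle_def by auto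
    have "conserved V E ori (\<lambda>i. \<Sum>j<n. (if i \<in> set (es j) then 1 else 0) * x j)"
      by (rule span_conserved[OF fin(2) cyc])
    then show "conserved V E ori f" using conserved_cong_f[of E f "\<lambda>i. \<Sum>j<n. (if i \<in> set (es j) then 1 else 0) * x j" V ori] x by simp
  qed
  have G4: "\<forall>f :: 'e \<Rightarrow> real. conserved V E ori f \<longleftrightarrow>
              (\<exists>x :: nat \<Rightarrow> real. \<forall>i\<in>E. f i = (\<Sum>j<n. (if i \<in> set (es j) then 1 else 0) * x j))"
  proof (intro allI iffI)
    fix f :: "'e \<Rightarrow> real" assume "conserved V E ori f"
    then show "\<exists>x :: nat \<Rightarrow> real. \<forall>i\<in>E. f i = (\<Sum>j<n. (if i \<in> set (es j) then 1 else 0) * x j)"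
      using I8 by blast
  next
    fix f :: "'e \<Rightarrow> real" assume h: "\<exists>x :: nat \<Rightarrow> real. \<forall>i\<in>E. f i = (\<Sum>j<n. (if i \<in> set (es j) then 1 else 0) * x j)"
    show "conserved V E ori f" by (rule bk[OF h])
  qed
  show ?thesis unfolding nL[symmetric]
    by (intro exI[of _ ori] exI[of _ es] exI[of _ vs] conjI I1 I6 I7 G4)
qed


end
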